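(* Let $S=\{\rho_1=0<\rho_2<\cdots\}$ be a numerical semigroup. For a positive integer $d$ let $R_d=\{i\ge 1:\ \#A[\rho_i]<d\}$. Then the following are equivalent: (a) $S$ is an Arf semigroup; (b) for every positive integer $d$, $\#R_d=\rho_{\lceil d/2\rceil}+\lfloor d/2\rfloor$.
   Context: A numerical semigroup is a submonoid $S$ of $(\mathbb{N}_0,+)$ with finite complement, with elements listed increasingly $\rho_1=0<\rho_2<\cdots$. $S$ is an Arf semigroup if for all positive integers $i\ge j\ge k$ one has $\rho_i+\rho_j-\rho_k\in S$. For $\rho\in S$, $A[\rho]=\{p\in S:\ \rho-p\in S\}$. *)

theory Defs
  imports Main "HOL-Library.Infinite_Set"
begin

definition numerical_semigroup :: "nat set \<Rightarrow> bool" where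
  "numerical_semigroup S \<longleftrightarrow>
     0 \<in> S \<and> (\<forall>a\<in>S. \<forall>b\<in>S. a + b \<in> S) \<and> finite (UNIV - S)"

text \<open>rho S i is the i-th element of S listed increasingly, 1-indexed (rho S 1 = 0).\<close>
definition rho :: "nat set \<Rightarrow> nat \<Rightarrow> nat" where
  "rho S i = enumerate S (i - 1)"

definition arf :: "nat set \<Rightarrow> bool" where
  "arf S \<longleftrightarrow> (\<forall>i j k. 1 \<le> k \<and> k \<le> j \<and> j \<le> i \<longrightarrow>
      rho S i + rho S j - rho S k \<in> S)"

text \<open>A[r] = {p in S. r - p in S} (with r - p required to be a nonnegative integer).\<close>
definition Aset :: "nat set \<Rightarrow> nat \<Rightarrow> nat set" where
  "Aset S r = {p \<in> S. p \<le> r \<and> r - p \<in> S}"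

definition Rset :: "nat set \<Rightarrow> nat \<Rightarrow> nat set" where
  "Rset S d = {i. 1 \<le> i \<and> card (Aset S (rho S i)) < d}"

end

theory Submission
  imports Defs
begin

lemma ns_add: "numerical_semigroup S \<Longrightarrow> a \<in> S \<Longrightarrow> b \<in> S \<Longrightarrow> a + b \<in> S"
  unfolding numerical_semigroup_def by blast

lemma ns_zero: "numerical_semigroup S \<Longrightarrow> 0 \<in> S"
  unfolding numerical_semigroup_def by blast

lemma ns_infinite: "numerical_semigroup S \<Longrightarrow> infinite S"
proof
  assume "numerical_semigroup S" "finite S"
  then have "finite (S \<union> (UNIV - S))" unfolding numerical_semigroup_def by blast
  then show False by simp
qed

lemma rho_in: "numerical_semigroup S \<Longrightarrow> rho S i \<in> S"
  unfolding rho_def using ns_infinite enumerate_in_set by blast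

lemma rho_less_iff: "numerical_semigroup S \<Longrightarrow> 1 \<le> i \<Longrightarrow> 1 \<le> j \<Longrightarrow> rho S i < rho S j \<longleftrightarrow> i < j"
  unfolding rho_def using ns_infinite[of S] enumerate_mono_iff[of S "i-1" "j-1"] by auto

lemma rho_le_iff: "numerical_semigroup S \<Longrightarrow> 1 \<le> i \<Longrightarrow> 1 \<le> j \<Longrightarrow> rho S i \<le> rho S j \<longleftrightarrow> i \<le> j"
  using rho_less_iff[of S j i] by auto

lemma rho_surj: "numerical_semigroup S \<Longrightarrow> s \<in> S \<Longrightarrow> \<exists>i\<ge>1. rho S i = s"
proof -
  assume a: "numerical_semigroup S" "s \<in> S"
  then obtain n where "enumerate S n = s" using enumerate_Ex ns_infinite by blast
  then have "rho S (n+1) = s" unfolding rho_def by simp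
  then show ?thesis by (intro exI[of _ "n+1"]) auto
qed

lemma rho_inj: "numerical_semigroup S \<Longrightarrow> 1 \<le> i \<Longrightarrow> 1 \<le> j \<Longrightarrow> rho S i = rho S j \<Longrightarrow> i = j"
  by (metis le_antisym order_refl rho_le_iff)

lemma below_eq: 
  assumes "numerical_semigroup S" "1 \<le> k"
  shows "{p\<in>S. p < rho S k} = rho S ` {1..<k}"
proof
  show "{p \<in> S. p < rho S k} \<subseteq> rho S ` {1..<k}"
  proof
    fix p assume "p \<in> {p \<in> S. p < rho S k}"
    then have p: "p \<in> S" "p < rho S k" by auto
    then obtain i where i: "i \<ge> 1" "rho S i = p" using rho_surj assms by blast
    then have "i < k" using rho_less_iff[OF assms(1) i(1) assms(2)] p by simp
    then show "p \<in> rho S ` {1..<k}" using i by auto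
  qed
next
  show "rho S ` {1..<k} \<subseteq> {p \<in> S. p < rho S k}"
    using rho_in[OF assms(1)] rho_less_iff[OF assms(1)] assms(2) by auto
qed

lemma card_below:
  assumes "numerical_semigroup S" "1 \<le> k"
  shows "card {p\<in>S. p < rho S k} = k - 1"
proof -
  have "inj_on (rho S) {1..<k}" using rho_inj[OF assms(1)] by (auto simp: inj_on_def)
  then show ?thesis using below_eq[OF assms] by (simp add: card_image)
qed

lemma arf_iff:
  assumes "numerical_semigroup S"
  shows "arf S \<longleftrightarrow> (\<forall>x y z. x \<in> S \<longrightarrow> y \<in> S \<longrightarrow> z \<in> S \<longrightarrow> z \<le> y \<longrightarrow> y \<le> x \<longrightarrow> x + y - z \<in> S)"
proof
  assume A: "arf S"
  show "\<forall>x y z. x \<in> S \<longrightarrow> y \<in> S \<longrightarrow> z \<in> S \<longrightarrow> z \<le> y \<longrightarrow> y \<le> x \<longrightarrow> x + y - z \<in> S"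
  proof (intro allI impI)
    fix x y z assume h: "x \<in> S" "y \<in> S" "z \<in> S" "z \<le> y" "y \<le> x"
    obtain i where i: "i \<ge> 1" "rho S i = x" using rho_surj assms h by blast
    obtain j where j: "j \<ge> 1" "rho S j = y" using rho_surj assms h by blast
    obtain k where k: "k \<ge> 1" "rho S k = z" using rho_surj assms h by blast
    have "k \<le> j" "j \<le> i" using rho_le_iff[OF assms] i j k h by auto
    then show "x + y - z \<in> S" using A k i j unfolding arf_def by blast
  qed
next
  assume B: "\<forall>x y z. x \<in> S \<longrightarrow> y \<in> S \<longrightarrow> z \<in> S \<longrightarrow> z \<le> y \<longrightarrow> y \<le> x \<longrightarrow> x + y - z \<in> S"
  show "arf S" unfolding arf_def
  proof (intro allI impI)
    fix i j k :: nat assume h: "1 \<le> k \<and> k \<le> j \<and> j \<le> i"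
    then have "rho S k \<le> rho S j" "rho S j \<le> rho S i" using rho_le_iff[OF assms] by auto
    then show "rho S i + rho S j - rho S k \<in> S" using B rho_in[OF assms] by blast
  qed
qed

lemma T_closed_aux:
  "\<forall>(T::nat set) a b. a + b = n \<longrightarrow> 0 \<in> T \<longrightarrow> (\<forall>x y. x \<in> T \<longrightarrow> y \<in> T \<longrightarrow> y \<le> x \<longrightarrow> 2*x - y \<in> T) \<longrightarrow> a \<in> T \<longrightarrow> b \<in> T
   \<longrightarrow> a + b \<in> T"
proof (induction n rule: less_induct)
  case (less n)
  show ?case
  proof (intro allI impI)
    fix T :: "nat set" and a b
    assume n: "a + b = n" and T0: "0 \<in> T" and TP: "\<forall>x y. x \<in> T \<longrightarrow> y \<in> T \<longrightarrow> y \<le> x \<longrightarrow> 2*x - y \<in> T"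
      and abT: "a \<in> T" "b \<in> T"
  have main: "a' + b' \<in> T" if ab: "a' \<in> T" "b' \<in> T" "b' \<le> a'" "a' + b' = n" for a' b'
  proof (cases "b' = 0")
    case True then show ?thesis using ab by simp
  next
    case False
    define T' where "T' = {w. b' + w \<in> T}"
    have "0 \<in> T'" using ab T'_def by simp
    moreover have "\<forall>x y. x \<in> T' \<longrightarrow> y \<in> T' \<longrightarrow> y \<le> x \<longrightarrow> 2*x - y \<in> T'"
    proof (intro allI impI)
      fix x y assume "x \<in> T'" "y \<in> T'" "y \<le> x"
      then have "2*(b'+x) - (b'+y) \<in> T" using TP[rule_format, of "b'+x" "b'+y"] T'_def by auto
      moreover have "2*(b'+x) - (b'+y) = b' + (2*x - y)" using \<open>y \<le> x\<close> by simp
      ultimately show "2*x - y \<in> T'" using T'_def by simp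
    qed
    moreover have "a' - b' \<in> T'" using ab T'_def by simp
    moreover have "b' \<in> T'" using ab T'_def T0 TP by (metis mult_2 diff_zero mem_Collect_eq zero_le)
    moreover have "(a' - b') + b' < n" using ab False by simp
    ultimately have "(a' - b') + b' \<in> T'" using less.IH by blast
    then show ?thesis using T'_def ab by (simp add: add.commute)
  qed
  show "a + b \<in> T"
  proof (cases "b \<le> a")
    case True then show ?thesis using main abT n by blast
  next
    case False then show ?thesis using main[of b a] abT n by (simp add: add.commute)
  qed
  qed
qed

lemma T_closed:
  "0 \<in> T \<Longrightarrow> (\<forall>x y. x \<in> T \<longrightarrow> y \<in> T \<longrightarrow> y \<le> x \<longrightarrow> 2*x - y \<in> T) \<Longrightarrow> a \<in> T \<Longrightarrow> b \<in> T
   \<Longrightarrow> a + (b::nat) \<in> T"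
  using T_closed_aux by blast

lemma P_imp_arf:
  assumes S: "numerical_semigroup S"
    and P: "\<forall>x y. x \<in> S \<longrightarrow> y \<in> S \<longrightarrow> y \<le> x \<longrightarrow> 2*x - y \<in> S"
  shows "arf S"
  unfolding arf_iff[OF S]
proof (intro allI impI)
  fix x y z assume h: "x \<in> S" "y \<in> S" "z \<in> S" "z \<le> y" "y \<le> x"
  define T where "T = {w. z + w \<in> S}"
  have "0 \<in> T" using h T_def by simp
  moreover have "\<forall>a b. a \<in> T \<longrightarrow> b \<in> T \<longrightarrow> b \<le> a \<longrightarrow> 2*a - b \<in> T"
  proof (intro allI impI)
    fix a b assume "a \<in> T" "b \<in> T" "b \<le> a"
    then have "2*(z+a) - (z+b) \<in> S" using P[rule_format, of "z+a" "z+b"] T_def by auto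
    moreover have "2*(z+a) - (z+b) = z + (2*a - b)" using \<open>b \<le> a\<close> by simp
    ultimately show "2*a - b \<in> T" using T_def by simp
  qed
  moreover have "x - z \<in> T" "y - z \<in> T" using h T_def by auto
  ultimately have "(x - z) + (y - z) \<in> T" using T_closed by blast
  moreover have "z + ((x - z) + (y - z)) = x + y - z" using h by simp
  ultimately show "x + y - z \<in> S" using T_def by simp
qed

definition LL :: "nat set \<Rightarrow> nat \<Rightarrow> nat set" where
  "LL S s = {p\<in>S. 2*p < s \<and> s - p \<in> S}"
definition MM :: "nat set \<Rightarrow> nat \<Rightarrow> nat set" where
  "MM S s = {p\<in>S. 2*p = s}"

lemma finite_LL: "finite (LL S s)"
  by (rule finite_subset[of _ "{..s}"]) (auto simp: LL_def)

lemma card_MM_le: "card (MM S s) \<le> 1"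
proof -
  have "MM S s \<subseteq> {s div 2}" by (auto simp: MM_def)
  then have "card (MM S s) \<le> card {s div 2}" by (intro card_mono) auto
  then show ?thesis by simp
qed

lemma MM_eq: "y \<in> S \<Longrightarrow> MM S (2*y) = {y}"
  by (auto simp: MM_def)

lemma card_Aset: "card (Aset S s) = 2 * card (LL S s) + card (MM S s)"
proof -
  have eq: "Aset S s = LL S s \<union> MM S s \<union> (\<lambda>p. s-p) ` LL S s"
  proof
    show "Aset S s \<subseteq> LL S s \<union> MM S s \<union> (\<lambda>p. s-p) ` LL S s"
    proof
      fix p assume "p \<in> Aset S s"
      then have p: "p \<in> S" "p \<le> s" "s - p \<in> S" by (auto simp: Aset_def)
      show "p \<in> LL S s \<union> MM S s \<union> (\<lambda>p. s-p) ` LL S s"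
      proof (cases "2*p < s")
        case True then show ?thesis using p by (auto simp: LL_def)
      next
        case F: False
        show ?thesis
        proof (cases "2*p = s")
          case True then show ?thesis using p by (auto simp: MM_def)
        next
          case False
          then have "s - p \<in> LL S s" using p F by (auto simp: LL_def)
          moreover have "p = s - (s - p)" using p by simp
          ultimately show ?thesis by blast
        qed
      qed
    qed
  next
    show "LL S s \<union> MM S s \<union> (\<lambda>p. s-p) ` LL S s \<subseteq> Aset S s"
      by (auto simp: LL_def MM_def Aset_def)
  qed
  have fin: "finite (MM S s)" by (rule finite_subset[of _ "{..s}"]) (auto simp: MM_def)
  have d1: "LL S s \<inter> MM S s = {}" by (auto simp: LL_def MM_def)
  have d2: "(LL S s \<union> MM S s) \<inter> (\<lambda>p. s-p) ` LL S s = {}" by (auto simp: LL_def MM_def)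
  have inj: "inj_on (\<lambda>p. s-p) (LL S s)" by (auto simp: inj_on_def LL_def)
  have "card (Aset S s) = card (LL S s \<union> MM S s) + card ((\<lambda>p. s-p) ` LL S s)"
    unfolding eq using d2 fin finite_LL by (simp add: card_Un_disjoint)
  also have "\<dots> = card (LL S s) + card (MM S s) + card (LL S s)"
    using d1 fin finite_LL inj by (simp add: card_Un_disjoint card_image)
  finally show ?thesis by simp
qed

lemma LL_2x_sub: "LL S (2*x) \<subseteq> {p\<in>S. p < x}"
  by (auto simp: LL_def)

lemma LL_init:
  assumes AR: "\<forall>x y z. x\<in>S \<longrightarrow> y\<in>S \<longrightarrow> z\<in>S \<longrightarrow> z\<le>y \<longrightarrow> y\<le>x \<longrightarrow> x+y-z\<in>S"
    and p: "p \<in> LL S s" and q: "q \<in> S" "q \<le> p"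
  shows "q \<in> LL S s"
proof -
  have h: "p \<in> S" "2*p < s" "s - p \<in> S" using p by (auto simp: LL_def)
  then have "(s - p) + p - q \<in> S" using AR[rule_format, of "s-p" p q] q by linarith
  moreover have "(s - p) + p - q = s - q" using h q by simp
  ultimately show ?thesis using h q by (auto simp: LL_def)
qed

lemma LL_ge:
  assumes S: "numerical_semigroup S"
    and AR: "\<forall>x y z. x\<in>S \<longrightarrow> y\<in>S \<longrightarrow> z\<in>S \<longrightarrow> z\<le>y \<longrightarrow> y\<le>x \<longrightarrow> x+y-z\<in>S"
    and k: "1 \<le> k"
  shows "k \<le> card (LL S s) \<longleftrightarrow> (2 * rho S k < s \<and> s - rho S k \<in> S)"
proof
  assume c: "k \<le> card (LL S s)"
  show "2 * rho S k < s \<and> s - rho S k \<in> S"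
  proof (rule ccontr)
    assume "\<not> (2 * rho S k < s \<and> s - rho S k \<in> S)"
    then have nin: "rho S k \<notin> LL S s" by (auto simp: LL_def)
    have "LL S s \<subseteq> {p\<in>S. p < rho S k}"
    proof
      fix p assume p: "p \<in> LL S s"
      show "p \<in> {p\<in>S. p < rho S k}"
      proof (rule ccontr)
        assume "p \<notin> {p\<in>S. p < rho S k}"
        then have "rho S k \<le> p" using p by (auto simp: LL_def)
        then have "rho S k \<in> LL S s" using LL_init[OF AR p] rho_in[OF S] by blast
        then show False using nin by simp
      qed
    qed
    moreover have "finite {p\<in>S. p < rho S k}" by (rule finite_subset[of _ "{..<rho S k}"]) auto
    ultimately have "card (LL S s) \<le> card {p\<in>S. p < rho S k}" by (rule card_mono[rotated])
    then have "card (LL S s) \<le> k - 1"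
      using card_below[OF S k] by simp
    then show False using c k by simp
  qed
next
  assume h: "2 * rho S k < s \<and> s - rho S k \<in> S"
  then have rk: "rho S k \<in> LL S s" using rho_in[OF S] by (auto simp: LL_def)
  have sub: "{p\<in>S. p < rho S (k+1)} \<subseteq> LL S s"
  proof
    fix p assume p: "p \<in> {p\<in>S. p < rho S (k+1)}"
    then obtain i where i: "i \<ge> 1" "rho S i = p" using rho_surj[OF S] by blast
    then have "i < k+1" using rho_less_iff[OF S, of i "k+1"] p by auto
    then have "p \<le> rho S k" using rho_le_iff[OF S, of i k] i k by auto
    then show "p \<in> LL S s" using LL_init[OF AR rk] p by blast
  qed
  have "card {p\<in>S. p < rho S (k+1)} = k" using card_below[OF S, of "k+1"] by simp
  then show "k \<le> card (LL S s)" using card_mono[OF finite_LL sub] by simp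
qed

lemma LL_2x:
  assumes S: "numerical_semigroup S"
    and AR: "\<forall>x y z. x\<in>S \<longrightarrow> y\<in>S \<longrightarrow> z\<in>S \<longrightarrow> z\<le>y \<longrightarrow> y\<le>x \<longrightarrow> x+y-z\<in>S"
    and k: "1 \<le> k"
  shows "card (LL S (2 * rho S k)) = k - 1"
proof -
  have "LL S (2 * rho S k) = {p\<in>S. p < rho S k}"
  proof
    show "LL S (2 * rho S k) \<subseteq> {p\<in>S. p < rho S k}" by (rule LL_2x_sub)
    show "{p\<in>S. p < rho S k} \<subseteq> LL S (2 * rho S k)"
    proof
      fix p assume p: "p \<in> {p\<in>S. p < rho S k}"
      then have "rho S k + rho S k - p \<in> S" using AR rho_in[OF S] by auto
      then show "p \<in> LL S (2 * rho S k)" using p by (auto simp: LL_def mult_2)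
    qed
  qed
  then show ?thesis using card_below[OF S k] by simp
qed

lemma nu_even:
  assumes S: "numerical_semigroup S"
    and AR: "\<forall>x y z. x\<in>S \<longrightarrow> y\<in>S \<longrightarrow> z\<in>S \<longrightarrow> z\<le>y \<longrightarrow> y\<le>x \<longrightarrow> x+y-z\<in>S"
    and k: "1 \<le> k"
  shows "2*k \<le> card (Aset S s) \<longleftrightarrow> (2 * rho S k < s \<and> s - rho S k \<in> S)"
proof -
  have "2*k \<le> card (Aset S s) \<longleftrightarrow> k \<le> card (LL S s)"
    using card_Aset[of S s] card_MM_le[of S s] by linarith
  then show ?thesis using LL_ge[OF S AR k] by simp
qed

lemma nu_odd:
  assumes S: "numerical_semigroup S"
    and AR: "\<forall>x y z. x\<in>S \<longrightarrow> y\<in>S \<longrightarrow> z\<in>S \<longrightarrow> z\<le>y \<longrightarrow> y\<le>x \<longrightarrow> x+y-z\<in>S"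
    and k: "1 \<le> k"
  shows "2*k - 1 \<le> card (Aset S s) \<longleftrightarrow> (2 * rho S k \<le> s \<and> s - rho S k \<in> S)"
proof
  assume c: "2*k - 1 \<le> card (Aset S s)"
  show "2 * rho S k \<le> s \<and> s - rho S k \<in> S"
  proof (cases "k \<le> card (LL S s)")
    case True then show ?thesis using LL_ge[OF S AR k] by auto
  next
    case False
    then have cl: "card (LL S s) = k - 1" "card (MM S s) = 1"
      using c card_Aset[of S s] card_MM_le[of S s] by linarith+
    then obtain y where y: "MM S s = {y}" using card_1_singletonE by blast
    then have yS: "y \<in> S" "s = 2*y" by (auto simp: MM_def)
    obtain j where j: "j \<ge> 1" "rho S j = y" using rho_surj[OF S yS(1)] by blast
    have "j = k"
    proof (rule ccontr)
      assume "j \<noteq> k"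
      then consider "j < k" | "k < j" by linarith
      then show False
      proof cases
        case 1
        have "card (LL S s) = j - 1" using LL_2x[OF S AR j(1)] j yS by simp
        then show False using cl 1 j by simp
      next
        case 2
        then have lt: "rho S k < y" using rho_less_iff[OF S k j(1)] j by simp
        then have "y + y - rho S k \<in> S" using AR yS rho_in[OF S] by auto
        then have "2 * rho S k < s \<and> s - rho S k \<in> S" using yS lt by (simp add: mult_2)
        then have "k \<le> card (LL S s)" using LL_ge[OF S AR k] by simp
        then show False using False by simp
      qed
    qed
    then show ?thesis using yS j rho_in[OF S] by auto
  qed
next
  assume h: "2 * rho S k \<le> s \<and> s - rho S k \<in> S"
  show "2*k - 1 \<le> card (Aset S s)"
  proof (cases "2 * rho S k < s")
    case True
    then have "2*k \<le> card (Aset S s)" using nu_even[OF S AR k] h by simp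
    then show ?thesis by simp
  next
    case False
    then have s: "s = 2 * rho S k" using h by simp
    have "card (MM S s) = 1" unfolding s using MM_eq[OF rho_in[OF S]] by simp
    moreover have "card (LL S s) = k - 1" unfolding s by (rule LL_2x[OF S AR k])
    ultimately show ?thesis using card_Aset[of S s] k by simp
  qed
qed

lemma card_S_below:
  assumes "UNIV - S \<subseteq> {..<K}"
  shows "card (S \<inter> {..<K}) = K - card (UNIV - S)" "card (UNIV - S) \<le> K"
proof -
  have fin: "finite (UNIV - S)" using assms finite_subset by blast
  have "{..<K} = (S \<inter> {..<K}) \<union> (UNIV - S)" using assms by auto
  moreover have "(S \<inter> {..<K}) \<inter> (UNIV - S) = {}" by auto
  ultimately have "K = card (S \<inter> {..<K}) + card (UNIV - S)"
    using fin by (metis card_Un_disjoint card_lessThan finite_Int finite_lessThan)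
  then show "card (S \<inter> {..<K}) = K - card (UNIV - S)" "card (UNIV - S) \<le> K" by simp_all
qed

lemma count_shift:
  fixes S V :: "nat set"
  assumes fin: "finite (UNIV - S)" and V: "V \<subseteq> S" "finite (S - V)" and cV: "(+) c ` V \<subseteq> S"
  shows "card (S - (+) c ` V) = c + card (S - V)"
proof -
  obtain N1 where N1: "UNIV - S \<subseteq> {..<N1}" using fin finite_nat_iff_bounded by blast
  obtain N2 where N2: "S - V \<subseteq> {..<N2}" using V finite_nat_iff_bounded by blast
  define N where "N = max N1 N2"
  have NS: "UNIV - S \<subseteq> {..<N}" using N1 N_def by auto
  have NV: "S - V \<subseteq> {..<N}" using N2 N_def by auto
  define M where "M = N + c"
  have MS: "UNIV - S \<subseteq> {..<M}" using NS M_def by auto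
  have A1: "S - (+) c ` V = (S \<inter> {..<M}) - (+) c ` (V \<inter> {..<N})"
  proof
    show "S - (+) c ` V \<subseteq> (S \<inter> {..<M}) - (+) c ` (V \<inter> {..<N})"
    proof
      fix s assume s: "s \<in> S - (+) c ` V"
      have "s < M"
      proof (rule ccontr)
        assume "\<not> s < M"
        then have "s - c \<ge> N" using M_def by simp
        then have nn: "s - c \<notin> {..<N}" by simp
        then have "s - c \<in> S" using NS by blast
        then have "s - c \<in> V" using NV nn by blast
        moreover note \<open>s - c \<in> S\<close>
        moreover have "s = c + (s - c)" using \<open>\<not> s < M\<close> M_def by simp
        ultimately show False using s by blast
      qed
      then show "s \<in> (S \<inter> {..<M}) - (+) c ` (V \<inter> {..<N})" using s by auto
    qed
  next
    show "(S \<inter> {..<M}) - (+) c ` (V \<inter> {..<N}) \<subseteq> S - (+) c ` V"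
      using M_def by auto
  qed
  have sub1: "(+) c ` (V \<inter> {..<N}) \<subseteq> S \<inter> {..<M}" using cV M_def by auto
  have c1: "card ((+) c ` (V \<inter> {..<N})) = card (V \<inter> {..<N})" by (simp add: card_image)
  have A2: "V \<inter> {..<N} = (S \<inter> {..<N}) - (S - V)" using V by auto
  have sub2: "S - V \<subseteq> S \<inter> {..<N}" using NV by auto
  have c2: "card (V \<inter> {..<N}) = card (S \<inter> {..<N}) - card (S - V)"
    unfolding A2 by (rule card_Diff_subset[OF V(2) sub2])
  have c3: "card (S - V) \<le> card (S \<inter> {..<N})" by (rule card_mono[OF _ sub2]) simp
  have "card (S - (+) c ` V) = card (S \<inter> {..<M}) - card ((+) c ` (V \<inter> {..<N}))"
    unfolding A1 by (rule card_Diff_subset[OF _ sub1]) (simp add: finite_subset[OF sub1])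
  also have "\<dots> = (M - card (UNIV - S)) - ((N - card (UNIV - S)) - card (S - V))"
    using c1 c2 card_S_below(1)[OF MS] card_S_below(1)[OF NS] by simp
  also have "\<dots> = c + card (S - V)"
    using card_S_below(2)[OF NS] c3 card_S_below(1)[OF NS] M_def by simp
  finally show ?thesis .
qed

lemma card_Rset:
  assumes S: "numerical_semigroup S"
  shows "card (Rset S d) = card {s\<in>S. card (Aset S s) < d}"
proof -
  have "rho S ` Rset S d = {s\<in>S. card (Aset S s) < d}"
  proof
    show "rho S ` Rset S d \<subseteq> {s\<in>S. card (Aset S s) < d}"
      using rho_in[OF S] by (auto simp: Rset_def)
    show "{s\<in>S. card (Aset S s) < d} \<subseteq> rho S ` Rset S d"
    proof
      fix s assume s: "s \<in> {s\<in>S. card (Aset S s) < d}"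
      then obtain i where "i \<ge> 1" "rho S i = s" using rho_surj[OF S] by blast
      then show "s \<in> rho S ` Rset S d" using s by (auto simp: Rset_def)
    qed
  qed
  moreover have "inj_on (rho S) (Rset S d)"
    using rho_inj[OF S] by (auto simp: inj_on_def Rset_def)
  ultimately show ?thesis by (metis card_image)
qed

lemma arf_count:
  assumes S: "numerical_semigroup S" and A: "arf S" and d: "1 \<le> d"
  shows "card (Rset S d) = rho S ((d + 1) div 2) + d div 2"
proof -
  have AR: "\<forall>x y z. x\<in>S \<longrightarrow> y\<in>S \<longrightarrow> z\<in>S \<longrightarrow> z\<le>y \<longrightarrow> y\<le>x \<longrightarrow> x+y-z\<in>S"
    using A arf_iff[OF S] by blast
  define k where "k = (d + 1) div 2"
  have k: "1 \<le> k" using d k_def by simp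
  define c where "c = rho S k"
  have cS: "c \<in> S" using rho_in[OF S] c_def by simp
  define V where "V = {t\<in>S. c \<le> t \<and> (even d \<longrightarrow> c < t)}"
  have key: "d \<le> card (Aset S s) \<longleftrightarrow> s \<in> (+) c ` V" if s: "s \<in> S" for s
  proof (cases "even d")
    case True
    then have dk: "d = 2*k" using k_def by auto
    have "s \<in> (+) c ` V \<longleftrightarrow> (2 * c < s \<and> s - c \<in> S)"
    proof
      assume "s \<in> (+) c ` V" then show "2 * c < s \<and> s - c \<in> S" using True by (auto simp: V_def)
    next
      assume h: "2 * c < s \<and> s - c \<in> S"
      then have "s - c \<in> V" "s = c + (s - c)" using True by (auto simp: V_def)
      then show "s \<in> (+) c ` V" by blast
    qed
    then show ?thesis using nu_even[OF S AR k, of s] dk c_def by simp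
  next
    case False
    then have dk: "d = 2*k - 1" using k_def by presburger
    have "s \<in> (+) c ` V \<longleftrightarrow> (2 * c \<le> s \<and> s - c \<in> S)"
    proof
      assume "s \<in> (+) c ` V" then show "2 * c \<le> s \<and> s - c \<in> S" using False by (auto simp: V_def)
    next
      assume h: "2 * c \<le> s \<and> s - c \<in> S"
      then have "s - c \<in> V" "s = c + (s - c)" using False by (auto simp: V_def)
      then show "s \<in> (+) c ` V" by blast
    qed
    then show ?thesis using nu_odd[OF S AR k, of s] dk c_def by simp
  qed
  have seteq: "{s\<in>S. card (Aset S s) < d} = S - (+) c ` V"
  proof -
    have "(+) c ` V \<subseteq> S" using ns_add[OF S cS] by (auto simp: V_def)
    then show ?thesis using key by force
  qed
  have SV: "S - V = {t\<in>S. t < c} \<union> (if even d then {c} else {})"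
    using cS by (auto simp: V_def)
  have fb: "finite {t\<in>S. t < c}" by (rule finite_subset[of _ "{..<c}"]) auto
  have cSV: "card (S - V) = d div 2"
  proof (cases "even d")
    case True
    then have "card (S - V) = card (insert c {t\<in>S. t < c})" unfolding SV by simp
    also have "\<dots> = Suc (k - 1)" using fb card_below[OF S k] c_def by simp
    finally show ?thesis using True k k_def by auto
  next
    case False
    then have "card (S - V) = k - 1" unfolding SV using card_below[OF S k] c_def by simp
    then show ?thesis using False k_def by presburger
  qed
  have fin: "finite (UNIV - S)" using S numerical_semigroup_def by blast
  have "card (S - (+) c ` V) = c + card (S - V)"
  proof (rule count_shift[OF fin])
    show "finite (S - V)" unfolding SV using fb by simp
  qed (auto simp: V_def ns_add[OF S cS])
  then show ?thesis using card_Rset[OF S] seteq cSV c_def k_def by simp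
qed

lemma count_imp_arf:
  assumes S: "numerical_semigroup S"
    and B: "\<forall>d::nat. 1 \<le> d \<longrightarrow> card (Rset S d) = rho S ((d + 1) div 2) + d div 2"
  shows "arf S"
proof -
  have uniq: "s = s'" if s: "s \<in> S" "s' \<in> S" "card (Aset S s) = 2*m+1" "card (Aset S s') = 2*m+1" for s s' m
  proof -
    define R1 where "R1 = Rset S (2*m+1)"
    define R2 where "R2 = Rset S (2*m+2)"
    have c1: "card R1 = rho S (m+1) + m"
    proof -
      have "card R1 = rho S ((2*m+1 + 1) div 2) + (2*m+1) div 2" using B R1_def by simp
      moreover have "(2*m+1 + 1) div 2 = m+1" "(2*m+1) div 2 = m" by presburger+
      ultimately show ?thesis by simp
    qed
    have c2: "card R2 = rho S (m+1) + (m+1)"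
    proof -
      have "card R2 = rho S ((2*m+2 + 1) div 2) + (2*m+2) div 2" using B R2_def by simp
      moreover have "(2*m+2 + 1) div 2 = m+1" "(2*m+2) div 2 = m+1" by presburger+
      ultimately show ?thesis by simp
    qed
    have "0 < card R2" using c2 by simp
    then have fin: "finite R2" by (rule card_ge_0_finite)
    have sub: "R1 \<subseteq> R2" by (auto simp: R1_def R2_def Rset_def)
    have "card (R2 - R1) = 1" using card_Diff_subset[OF finite_subset[OF sub fin] sub] c1 c2 by simp
    then obtain i0 where i0: "R2 - R1 = {i0}" using card_1_singletonE by blast
    obtain i where i: "i \<ge> 1" "rho S i = s" using rho_surj[OF S s(1)] by blast
    obtain i' where i': "i' \<ge> 1" "rho S i' = s'" using rho_surj[OF S s(2)] by blast
    have "i \<in> R2 - R1" "i' \<in> R2 - R1" using i i' s by (auto simp: R1_def R2_def Rset_def)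
    then show ?thesis using i0 i i' by auto
  qed
  have nu2x: "card (Aset S (2*y)) = 2 * card (LL S (2*y)) + 1" if "y \<in> S" for y
    using card_Aset[of S "2*y"] MM_eq[OF that] by simp
  have LLk: "\<forall>k. 1 \<le> k \<longrightarrow> card (LL S (2 * rho S k)) = k - 1" for n
  proof (intro allI)
    fix k show "1 \<le> k \<longrightarrow> card (LL S (2 * rho S k)) = k - 1"
    proof (induction k rule: less_induct)
      case (less k)
      show ?case
      proof
        assume k: "1 \<le> k"
        define l where "l = card (LL S (2 * rho S k))"
        have fb: "finite {p\<in>S. p < rho S k}" by (rule finite_subset[of _ "{..<rho S k}"]) auto
        have "l \<le> k - 1" unfolding l_def using card_mono[OF fb LL_2x_sub] card_below[OF S k] by simp
        moreover have "\<not> l < k - 1"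
        proof
          assume lt: "l < k - 1"
          define j where "j = l + 1"
          have j: "1 \<le> j" "j < k" using lt j_def by auto
          then have "card (LL S (2 * rho S j)) = l" using less.IH j_def by simp
          then have "card (Aset S (2 * rho S j)) = 2*l+1" using nu2x[OF rho_in[OF S]] by simp
          moreover have "card (Aset S (2 * rho S k)) = 2*l+1" using nu2x[OF rho_in[OF S]] l_def by simp
          ultimately have "2 * rho S j = 2 * rho S k" using uniq rho_in[OF S] ns_add[OF S] by (metis mult_2)
          then have "j = k" using rho_inj[OF S j(1) k] by simp
          then show False using j by simp
        qed
        ultimately show "card (LL S (2 * rho S k)) = k - 1" using l_def by simp
      qed
    qed
  qed
  have P: "\<forall>x y. x \<in> S \<longrightarrow> y \<in> S \<longrightarrow> y \<le> x \<longrightarrow> 2*x - y \<in> S"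
  proof (intro allI impI)
    fix x y assume h: "x \<in> S" "y \<in> S" "y \<le> x"
    show "2*x - y \<in> S"
    proof (cases "y = x")
      case True then show ?thesis using h by simp
    next
      case False
      obtain k where k: "k \<ge> 1" "rho S k = x" using rho_surj[OF S h(1)] by blast
      have fb: "finite {p\<in>S. p < rho S k}" by (rule finite_subset[of _ "{..<rho S k}"]) auto
      have "LL S (2 * rho S k) = {p\<in>S. p < rho S k}"
        by (rule card_subset_eq[OF fb LL_2x_sub]) (use LLk[rule_format, OF k(1)] card_below[OF S k(1)] in simp)
      then have "y \<in> LL S (2 * x)" using h False k by auto
      then show ?thesis by (simp add: LL_def)
    qed
  qed
  show ?thesis by (rule P_imp_arf[OF S P])
qed

theorem mainTheorem2:
  fixes S :: "nat set"
  assumes "numerical_semigroup S"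
  shows "arf S \<longleftrightarrow>
    (\<forall>d::nat. 1 \<le> d \<longrightarrow> card (Rset S d) = rho S ((d + 1) div 2) + d div 2)"
  using arf_count[OF assms] count_imp_arf[OF assms] by blast

end
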